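(* For every integer $n\ge1$ there exist a constant $C_n>0$ and measures $\mu_{nk}$, $1\le k\le n$, on $\Delta_n$ depending on parameters $w_1,\dots,w_n\in\mathbb{C}$ such that $\int_{t\in\Delta_n}|d\mu_{nk}|\le C_n$ and the following identity holds: $$\langle (w-w_1)\cdots(w-w_n)\rangle=\sum_{k=1}^n\int_{t\in\Delta_n}\langle w-t_1w_1-\dots-t_nw_n\rangle^k\,d\mu_{nk}(w_1,\dots,w_n,t).$$
   Context: For $w\in\mathbb{C}\setminus\{0\}$, $\langle w\rangle:=\overline w/w$ denotes the phase function. $\Delta_n=\{t=(t_1,\dots,t_n): t_j\ge0,\ \sum_j t_j=1\}$ is the standard $(n-1)$-simplex. $|d\mu|$ denotes the total variation of a (signed/complex) measure. *)

theory Defs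
  imports "HOL-Analysis.Analysis"
begin

text \<open>Phase function of a complex number: conj(w)/w. (In HOL, division by 0 gives 0,
  so phase 0 = 0; this value is only relevant on the exceptional set.)\<close>
definition phase :: "complex \<Rightarrow> complex" where
  "phase w = cnj w / w"

definition std_simplex :: "(real ^ 'n) set" where
  "std_simplex = {t. (\<forall>i. 0 \<le> t $ i) \<and> (\<Sum>i\<in>UNIV. t $ i) = 1}"

text \<open>A complex measure on a Borel set S of R^n, represented as h d\<nu> with \<nu> a finite
  positive Borel measure concentrated on S and h an \<nu>-integrable complex density.
  Every complex Borel measure has this form (e.g. polar decomposition).\<close>
type_synonym 'n cmeasure = "(real ^ 'n) measure \<times> (real ^ 'n \<Rightarrow> complex)"

definition is_cmeasure_on :: "(real ^ 'n) set \<Rightarrow> 'n cmeasure \<Rightarrow> bool" where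
  "is_cmeasure_on S \<mu> \<longleftrightarrow>
     finite_measure (fst \<mu>) \<and> sets (fst \<mu>) = sets borel \<and>
     integrable (fst \<mu>) (snd \<mu>) \<and> emeasure (fst \<mu>) (UNIV - S) = 0"

definition cm_total_var :: "'n cmeasure \<Rightarrow> real" where
  "cm_total_var \<mu> = (\<integral>t. cmod (snd \<mu> t) \<partial>(fst \<mu>))"

definition cm_integral :: "'n cmeasure \<Rightarrow> (real ^ 'n \<Rightarrow> complex) \<Rightarrow> complex" where
  "cm_integral \<mu> g = (\<integral>t. g t * snd \<mu> t \<partial>(fst \<mu>))"

end

theory Submission
  imports Defs
begin
lemma measurable_phase[measurable]: "phase \<in> borel_measurable borel"
  unfolding phase_def[abs_def] by (intro borel_measurable_divide borel_measurable_continuous_onI continuous_intros)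
lemma phase_sub_rho:
  fixes z W P :: complex and s :: real
  defines "x \<equiv> z - ((1 - of_real s) * W + of_real s * P)"
  assumes "x \<noteq> 0"
  shows "phase x - phase (W - P) = (cnj (z - W) - phase (W - P) * (z - W)) / x"
proof -
  have e: "cnj (W - P) - phase (W - P) * (W - P) = 0"
    by (cases "W - P = 0") (auto simp: phase_def)
  have "cnj x - phase (W - P) * x = (cnj (z - W) - phase (W - P) * (z - W))
      + of_real s * (cnj (W - P) - phase (W - P) * (W - P))"
    unfolding x_def by (simp add: algebra_simps)
  then have "cnj x - phase (W - P) * x = cnj (z - W) - phase (W - P) * (z - W)"
    using e by simp
  then show ?thesis using assms(2)
    by (simp add: phase_def field_simps)
qed

lemma key_integral:
  fixes z W P :: complex and a :: nat
  assumes a: "1 \<le> a" and zW: "z \<noteq> W"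
  defines "x \<equiv> \<lambda>s::real. z - ((1 - of_real s) * W + of_real s * P)"
  defines "\<rho> \<equiv> phase (W - P)"
  shows "((\<lambda>s. of_nat a * of_real s ^ (a - 1) * (phase (x s) - \<rho>) ^ (a + 1)) has_integral
          ((phase (x 1) - \<rho>) ^ a * (phase (x 0) - \<rho>))) {0..1}"
proof (cases "\<forall>s\<in>{0..1}. x s \<noteq> 0")
  case True
  obtain b where ab: "a = Suc b" using a by (cases a) auto
  define c where "c = cnj (z - W) - \<rho> * (z - W)"
  have x0: "x 0 = z - W" by (simp add: x_def)
  have x1: "x 1 = z - P" by (simp add: x_def)
  have ps: "phase (x s) - \<rho> = c / x s" if "s \<in> {0..1}" for s
    using phase_sub_rho[of z s W P] True that unfolding x_def c_def \<rho>_def by auto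
  define X where "X = (\<lambda>u::complex. z - ((1 - u) * W + u * P))"
  define G where "G = (\<lambda>u::complex. c ^ (a+1) * (u / X u) ^ a / (z - W))"
  have Xs: "X (of_real s) = x s" for s by (simp add: X_def x_def)
  have D: "((\<lambda>s. G (of_real s)) has_vector_derivative
            (of_nat a * of_real s ^ (a - 1) * (c / x s) ^ (a + 1))) (at s within {0..1})"
    if s: "s \<in> {0..1}" for s
  proof -
    have xs: "x s \<noteq> 0" using True s by auto
    have d1: "((\<lambda>u. u / X u) has_field_derivative (z - W) / (X (of_real s))^2) (at (of_real s))"
      using xs unfolding Xs[symmetric]
      by (auto intro!: derivative_eq_intros simp: X_def field_simps power2_eq_square)
    have d2: "(G has_field_derivative
        c ^ (a+1) * (of_nat a * ((z - W) / (X (of_real s))^2 * (of_real s / X (of_real s)) ^ (a - Suc 0))) / (z - W))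
        (at (of_real s))"
      unfolding G_def by (intro DERIV_cdivide DERIV_cmult DERIV_power d1)
    have "c ^ (a+1) * (of_nat a * ((z - W) / (X (of_real s))^2 * (of_real s / X (of_real s)) ^ (a - Suc 0))) / (z - W)
        = of_nat a * of_real s ^ (a - 1) * (c / x s) ^ (a + 1)"
      using xs zW unfolding Xs ab by (simp add: power_divide field_simps power2_eq_square)
    with d2 show ?thesis by (intro has_vector_derivative_real_field) simp
  qed
  have "((\<lambda>s. of_nat a * of_real s ^ (a - 1) * (c / x s) ^ (a + 1)) has_integral
          (G (of_real 1) - G (of_real 0))) {0..1}"
    by (rule fundamental_theorem_of_calculus) (use D in auto)
  moreover have "G (of_real 1) - G (of_real 0) = (c / x 1) ^ a * (c / x 0)"
    using zW unfolding G_def ab by (simp add: X_def x0 x1 power_divide field_simps)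
  ultimately have I: "((\<lambda>s. of_nat a * of_real s ^ (a - 1) * (c / x s) ^ (a + 1)) has_integral
          ((c / x 1) ^ a * (c / x 0))) {0..1}" by simp
  have "(phase (x 1) - \<rho>) ^ a * (phase (x 0) - \<rho>) = (c / x 1) ^ a * (c / x 0)"
    using ps[of 0] ps[of 1] by simp
  then show ?thesis
    using has_integral_spike_finite[OF finite.emptyI _ I, of "\<lambda>s. of_nat a * of_real s ^ (a - 1) * (phase (x s) - \<rho>) ^ (a + 1)"]
      ps by auto
next
  case False
  then obtain s0 where s0: "s0 \<in> {0..1}" "x s0 = 0" by auto
  have WP: "W \<noteq> P" using s0 zW by (auto simp: x_def algebra_simps)
  have c0: "cnj (z - W) - \<rho> * (z - W) = 0"
  proof -
    have e: "cnj (W - P) - \<rho> * (W - P) = 0" using WP by (simp add: \<rho>_def phase_def)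
    have "cnj (x s0) - \<rho> * x s0 = (cnj (z - W) - \<rho> * (z - W)) + of_real s0 * (cnj (W - P) - \<rho> * (W - P))"
      unfolding x_def by (simp add: algebra_simps)
    then show ?thesis using s0 e by simp
  qed
  have p0: "phase (x 0) - \<rho> = 0"
    using phase_sub_rho[of z 0 W P] zW c0 unfolding x_def \<rho>_def by simp
  have zero: "phase (x s) - \<rho> = 0" if "s \<noteq> s0" for s
  proof -
    have "x s \<noteq> 0"
    proof
      assume "x s = 0"
      then have "x s - x s0 = 0" using s0 by simp
      then have "of_real (s - s0) * (W - P) = 0" by (simp add: x_def algebra_simps)
      then show False using that WP by simp
    qed
    then show ?thesis using phase_sub_rho[of z s W P] c0 unfolding x_def \<rho>_def by simp
  qed
  show ?thesis
    apply (rule has_integral_spike_finite[where S="{s0}" and f="\<lambda>_. 0"])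
    using zero p0 a by auto
qed
definition cA :: "nat \<Rightarrow> nat \<Rightarrow> complex \<Rightarrow> complex" where
  "cA k m \<rho> = (if m = 1 then \<rho> ^ k else 0)"
definition cB :: "nat \<Rightarrow> nat \<Rightarrow> complex \<Rightarrow> complex" where
  "cB k m \<rho> = (\<Sum>a=1..k. of_nat (k choose a) * \<rho> ^ (k + 1 - a) * (of_nat (a choose m) * (-\<rho>) ^ (a - m)))"
definition cD :: "nat \<Rightarrow> nat \<Rightarrow> complex \<Rightarrow> real \<Rightarrow> complex" where
  "cD k m \<rho> s = (\<Sum>a=1..k. of_nat (k choose a) * \<rho> ^ (k - a) * (of_nat a * of_real s ^ (a - 1))
                    * (of_nat ((a+1) choose m) * (-\<rho>) ^ (a + 1 - m)))"

lemma pexp: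
  fixes y \<rho> :: complex
  assumes "j \<le> R"
  shows "(y - \<rho>) ^ j - (-\<rho>) ^ j = (\<Sum>m=1..R. of_nat (j choose m) * (-\<rho>) ^ (j - m) * y ^ m)"
proof -
  have "(y - \<rho>) ^ j = (y + (-\<rho>)) ^ j" by simp
  also have "\<dots> = (\<Sum>m\<le>j. of_nat (j choose m) * y ^ m * (-\<rho>) ^ (j - m))"
    by (rule binomial_ring)
  also have "\<dots> = (-\<rho>) ^ j + (\<Sum>m=1..j. of_nat (j choose m) * y ^ m * (-\<rho>) ^ (j - m))"
  proof -
    have "{..j} = insert 0 {1..j}" by auto
    then show ?thesis by simp
  qed
  also have "(\<Sum>m=1..j. of_nat (j choose m) * y ^ m * (-\<rho>) ^ (j - m))
      = (\<Sum>m=1..R. of_nat (j choose m) * (-\<rho>) ^ (j - m) * y ^ m)"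
  proof (rule sum.mono_neutral_cong_left)
    show "\<forall>i\<in>{1..R} - {1..j}. of_nat (j choose i) * (-\<rho>) ^ (j - i) * y ^ i = 0" by auto
  qed (use assms in \<open>auto simp: mult_ac\<close>)
  finally show ?thesis by simp
qed

lemma poly_integral:
  fixes a :: nat assumes "1 \<le> a"
  shows "((\<lambda>s::real. of_nat a * (of_real s :: complex) ^ (a - 1)) has_integral 1) {0..1}"
proof -
  have "((\<lambda>s::real. (of_real s :: complex) ^ a) has_vector_derivative (of_nat a * of_real s ^ (a - 1))) (at s within {0..1})" for s
    by (rule has_vector_derivative_real_field) (auto intro!: derivative_eq_intros)
  from fundamental_theorem_of_calculus[OF _ this] assms show ?thesis by (simp add: zero_power)
qed

lemma two_point_HK:
  fixes z W P :: complex and k R :: nat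
  assumes k: "1 \<le> k" and R: "k + 1 \<le> R" and zW: "z \<noteq> W"
  defines "x \<equiv> \<lambda>s::real. z - ((1 - of_real s) * W + of_real s * P)"
  defines "\<rho> \<equiv> phase (W - P)"
  shows "((\<lambda>s. \<Sum>m=1..R. cD k m \<rho> s * phase (x s) ^ m) has_integral
     (phase (z - P) ^ k * phase (z - W) - (\<Sum>m=1..R. cA k m \<rho> * phase (z - W) ^ m + cB k m \<rho> * phase (z - P) ^ m))) {0..1}"
proof -
  define Q0 where "Q0 = phase (z - W)"
  define Q1 where "Q1 = phase (z - P)"
  have x0: "x 0 = z - W" and x1: "x 1 = z - P" by (simp_all add: x_def)
  have swapD: "(\<Sum>m=1..R. cD k m \<rho> s * y ^ m) =
      (\<Sum>a=1..k. of_nat (k choose a) * \<rho> ^ (k - a) * (of_nat a * of_real s ^ (a - 1)) * ((y - \<rho>) ^ (a+1) - (-\<rho>) ^ (a+1)))" for s y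
  proof -
    have "(\<Sum>m=1..R. cD k m \<rho> s * y ^ m) =
      (\<Sum>a=1..k. of_nat (k choose a) * \<rho> ^ (k - a) * (of_nat a * of_real s ^ (a - 1)) *
         (\<Sum>m=1..R. of_nat ((a+1) choose m) * (-\<rho>) ^ (a + 1 - m) * y ^ m))"
      unfolding cD_def sum_distrib_right sum_distrib_left
      by (subst sum.swap) (auto intro!: sum.cong simp: mult_ac)
    also have "\<dots> = (\<Sum>a=1..k. of_nat (k choose a) * \<rho> ^ (k - a) * (of_nat a * of_real s ^ (a - 1)) * ((y - \<rho>) ^ (a+1) - (-\<rho>) ^ (a+1)))"
      using R by (intro sum.cong refl) (subst pexp[where R=R], auto)
    finally show ?thesis .
  qed
  have swapB: "(\<Sum>m=1..R. cB k m \<rho> * y ^ m) =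
      (\<Sum>a=1..k. of_nat (k choose a) * \<rho> ^ (k + 1 - a) * ((y - \<rho>) ^ a - (-\<rho>) ^ a))" for y
  proof -
    have "(\<Sum>m=1..R. cB k m \<rho> * y ^ m) =
      (\<Sum>a=1..k. of_nat (k choose a) * \<rho> ^ (k + 1 - a) *
         (\<Sum>m=1..R. of_nat (a choose m) * (-\<rho>) ^ (a - m) * y ^ m))"
      unfolding cB_def sum_distrib_right sum_distrib_left
      by (subst sum.swap) (auto intro!: sum.cong simp: mult_ac)
    also have "\<dots> = (\<Sum>a=1..k. of_nat (k choose a) * \<rho> ^ (k + 1 - a) * ((y - \<rho>) ^ a - (-\<rho>) ^ a))"
      using R by (intro sum.cong refl) (subst pexp[where R=R], auto)
    finally show ?thesis .
  qed
  have sumA: "(\<Sum>m=1..R. cA k m \<rho> * y ^ m) = \<rho> ^ k * y" for y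
  proof -
    have "(\<Sum>m=1..R. cA k m \<rho> * y ^ m) = (\<Sum>m\<in>{1..R}. if m = 1 then \<rho> ^ k * y else 0)"
      by (rule sum.cong) (simp_all add: cA_def)
    also have "\<dots> = \<rho> ^ k * y" using R by (subst sum.delta) auto
    finally show ?thesis .
  qed
  have I: "((\<lambda>s. \<Sum>a=1..k. of_nat (k choose a) * \<rho> ^ (k - a) * (of_nat a * of_real s ^ (a - 1) * (phase (x s) - \<rho>) ^ (a+1)
               - of_nat a * of_real s ^ (a - 1) * (-\<rho>) ^ (a+1))) has_integral
        (\<Sum>a=1..k. of_nat (k choose a) * \<rho> ^ (k - a) * ((Q1 - \<rho>) ^ a * (Q0 - \<rho>) - 1 * (-\<rho>) ^ (a+1)))) {0..1}"
  proof (intro has_integral_sum finite_atLeastAtMost has_integral_mult_right has_integral_diff has_integral_mult_left)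
    fix a assume "a \<in> {1..k}"
    then show "((\<lambda>s. of_nat a * of_real s ^ (a - 1) * (phase (x s) - \<rho>) ^ (a + 1)) has_integral (Q1 - \<rho>) ^ a * (Q0 - \<rho>)) {0..1}"
      using key_integral[of a z W P] zW unfolding Q0_def Q1_def x_def \<rho>_def by simp
    show "((\<lambda>s. of_nat a * complex_of_real s ^ (a - 1)) has_integral 1) {0..1}"
      using \<open>a \<in> {1..k}\<close> by (intro poly_integral) auto
  qed
  have eqf: "(\<Sum>m=1..R. cD k m \<rho> s * phase (x s) ^ m) = (\<Sum>a=1..k. of_nat (k choose a) * \<rho> ^ (k - a) * (of_nat a * of_real s ^ (a - 1) * (phase (x s) - \<rho>) ^ (a+1)
               - of_nat a * of_real s ^ (a - 1) * (-\<rho>) ^ (a+1)))" for s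
    unfolding swapD by (intro sum.cong refl) (simp add: algebra_simps)
  have val: "(\<Sum>a=1..k. of_nat (k choose a) * \<rho> ^ (k - a) * ((Q1 - \<rho>) ^ a * (Q0 - \<rho>) - 1 * (-\<rho>) ^ (a+1)))
     = Q1 ^ k * Q0 - (\<Sum>m=1..R. cA k m \<rho> * Q0 ^ m + cB k m \<rho> * Q1 ^ m)"
  proof -
    have bin: "Q1 ^ k = (\<Sum>a\<le>k. of_nat (k choose a) * (Q1 - \<rho>) ^ a * \<rho> ^ (k - a))"
      using binomial_ring[of "Q1 - \<rho>" \<rho> k] by simp
    have "{..k} = insert 0 {1..k}" by auto
    then have bin2: "Q1 ^ k = \<rho> ^ k + (\<Sum>a=1..k. of_nat (k choose a) * (Q1 - \<rho>) ^ a * \<rho> ^ (k - a))"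
      using bin by simp
    have pw: "\<rho> ^ (k + 1 - a) = \<rho> * \<rho> ^ (k - a)" if "a \<in> {1..k}" for a
      using that by (simp add: Suc_diff_le flip: power_Suc)
    have pw2: "\<rho> ^ (Suc k - a) = \<rho> * \<rho> ^ (k - a)" if "a \<in> {1..k}" for a
      using pw[OF that] by simp
    have "(\<Sum>m=1..R. cA k m \<rho> * Q0 ^ m + cB k m \<rho> * Q1 ^ m) = \<rho> ^ k * Q0 +
       (\<Sum>a=1..k. of_nat (k choose a) * \<rho> ^ (k + 1 - a) * ((Q1 - \<rho>) ^ a - (-\<rho>) ^ a))"
      by (simp only: sum.distrib sumA swapB)
    also have "\<dots> = \<rho> ^ k * Q0 +
       (\<Sum>a=1..k. of_nat (k choose a) * \<rho> ^ (k - a) * (\<rho> * (Q1 - \<rho>) ^ a - \<rho> * (-\<rho>) ^ a))"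
      by (intro arg_cong2[where f="(+)"] refl sum.cong) (auto simp: pw pw2 algebra_simps)
    finally have A: "(\<Sum>m=1..R. cA k m \<rho> * Q0 ^ m + cB k m \<rho> * Q1 ^ m) = \<rho> ^ k * Q0 +
       (\<Sum>a=1..k. of_nat (k choose a) * \<rho> ^ (k - a) * (\<rho> * (Q1 - \<rho>) ^ a - \<rho> * (-\<rho>) ^ a))" .
    have "Q1 ^ k * Q0 = \<rho> ^ k * Q0 + (\<Sum>a=1..k. of_nat (k choose a) * \<rho> ^ (k - a) * ((Q1 - \<rho>) ^ a * Q0))"
      unfolding bin2 by (simp add: algebra_simps sum_distrib_right sum_distrib_left)
    also have "\<dots> = \<rho> ^ k * Q0 + (\<Sum>a=1..k. of_nat (k choose a) * \<rho> ^ (k - a) * (\<rho> * (Q1 - \<rho>) ^ a - \<rho> * (-\<rho>) ^ a))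
        + (\<Sum>a=1..k. of_nat (k choose a) * \<rho> ^ (k - a) * ((Q1 - \<rho>) ^ a * (Q0 - \<rho>) - 1 * (-\<rho>) ^ (a+1)))"
      by (simp add: sum.distrib[symmetric] algebra_simps)
    finally show ?thesis using A by simp
  qed
  have "((\<lambda>s. \<Sum>m=1..R. cD k m \<rho> s * phase (x s) ^ m) has_integral
     (Q1 ^ k * Q0 - (\<Sum>m=1..R. cA k m \<rho> * Q0 ^ m + cB k m \<rho> * Q1 ^ m))) {0..1}"
    using I unfolding eqf[symmetric] val .
  then show ?thesis by (simp only: Q0_def Q1_def)
qed

definition sig :: "real \<Rightarrow> real" where
  "sig s = (if s \<le> 1 then s else if s \<le> 2 then 0 else 1)"
definition cG :: "nat \<Rightarrow> nat \<Rightarrow> complex \<Rightarrow> real \<Rightarrow> complex" where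
  "cG k m \<rho> s = (if s \<le> 1 then cD k m \<rho> s else if s \<le> 2 then cA k m \<rho> else cB k m \<rho>)"
definition bG :: "nat \<Rightarrow> nat \<Rightarrow> real" where
  "bG k m = 1 + (\<Sum>a=1..k. real (k choose a) * real (a choose m))
     + (\<Sum>a=1..k. real (k choose a) * real a * real ((a+1) choose m))"

lemma norm_phase_le: "cmod (phase x) \<le> 1"
  by (cases "x = 0") (auto simp: phase_def norm_divide)

lemma sig_range: "0 \<le> s \<Longrightarrow> sig s \<in> {0..1}"
  by (auto simp: sig_def)

lemma bound_cG:
  assumes "cmod \<rho> \<le> 1" "s \<in> {0..3}"
  shows "cmod (cG k m \<rho> s) \<le> bG k m"
proof -
  have p: "cmod \<rho> ^ n \<le> 1" for n using assms(1) by (simp add: power_le_one)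
  have bA: "cmod (cA k m \<rho>) \<le> 1" using p by (auto simp: cA_def norm_power)
  have bB: "cmod (cB k m \<rho>) \<le> (\<Sum>a=1..k. real (k choose a) * real (a choose m))"
    unfolding cB_def
  proof (rule order_trans[OF norm_sum], rule sum_mono)
    fix a
    have "cmod (of_nat (k choose a) * \<rho> ^ (k + 1 - a) * (of_nat (a choose m) * (- \<rho>) ^ (a - m)))
        = real (k choose a) * cmod \<rho> ^ (k + 1 - a) * (real (a choose m) * cmod \<rho> ^ (a - m))"
      by (simp add: norm_mult norm_power)
    also have "\<dots> \<le> real (k choose a) * 1 * (real (a choose m) * 1)"
      using p by (intro mult_mono) auto
    finally show "cmod (of_nat (k choose a) * \<rho> ^ (k + 1 - a) * (of_nat (a choose m) * (- \<rho>) ^ (a - m)))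
        \<le> real (k choose a) * real (a choose m)" by simp
  qed
  have bD: "cmod (cD k m \<rho> s) \<le> (\<Sum>a=1..k. real (k choose a) * real a * real ((a+1) choose m))"
    if s1: "s \<le> 1"
    unfolding cD_def
  proof (rule order_trans[OF norm_sum], rule sum_mono)
    fix a
    have ps: "\<bar>s\<bar> ^ n \<le> 1" for n using s1 assms(2) by (intro power_le_one) auto
    have "cmod (of_nat (k choose a) * \<rho> ^ (k - a) * (of_nat a * complex_of_real s ^ (a - 1)) *
         (of_nat ((a + 1) choose m) * (- \<rho>) ^ (a + 1 - m)))
        = real (k choose a) * cmod \<rho> ^ (k - a) * (real a * \<bar>s\<bar> ^ (a - 1)) * (real ((a + 1) choose m) * cmod \<rho> ^ (a + 1 - m))"
      by (simp add: norm_mult norm_power)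
    also have "\<dots> \<le> real (k choose a) * 1 * (real a * 1) * (real ((a + 1) choose m) * 1)"
      using p ps by (intro mult_mono) auto
    finally show "cmod (of_nat (k choose a) * \<rho> ^ (k - a) * (of_nat a * complex_of_real s ^ (a - 1)) *
         (of_nat ((a + 1) choose m) * (- \<rho>) ^ (a + 1 - m)))
        \<le> real (k choose a) * real a * real ((a + 1) choose m)" by simp
  qed
  have nn1: "0 \<le> (\<Sum>a=1..k. real (k choose a) * real (a choose m))" by (intro sum_nonneg) auto
  have nn2: "0 \<le> (\<Sum>a=1..k. real (k choose a) * real a * real ((a+1) choose m))" by (intro sum_nonneg) auto
  show ?thesis using bA bB bD nn1 nn2 unfolding cG_def bG_def by auto
qed

lemma measurable_cG[measurable (raw)]:
  assumes [measurable]: "f \<in> borel_measurable M" "g \<in> borel_measurable M"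
  shows "(\<lambda>x. cG k m (f x) (g x)) \<in> borel_measurable M"
  unfolding cG_def cD_def cA_def cB_def by measurable

lemma measurable_sig[measurable (raw)]:
  assumes [measurable]: "g \<in> borel_measurable M"
  shows "(\<lambda>x. sig (g x)) \<in> borel_measurable M"
  unfolding sig_def by measurable

lemma measurable_phase'[measurable (raw)]:
  assumes "g \<in> borel_measurable M"
  shows "(\<lambda>x. phase (g x)) \<in> borel_measurable M"
  using measurable_compose[OF assms measurable_phase] by simp

lemma two_point_inner:
  fixes z W P :: complex and k R :: nat
  assumes k: "1 \<le> k" and R: "k + 1 \<le> R" and zW: "z \<noteq> W"
  defines "\<rho> \<equiv> phase (W - P)"
  defines "F \<equiv> (\<lambda>s. \<Sum>m=1..R. phase (z - ((1 - of_real (sig s)) * W + of_real (sig s) * P)) ^ m * cG k m \<rho> s)"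
  shows "integrable (lebesgue_on {0..3}) F"
    and "integral\<^sup>L (lebesgue_on {0..3}) F = phase (z - P) ^ k * phase (z - W)"
proof -
  have Fm: "F \<in> borel_measurable borel" unfolding F_def by measurable
  have rho1: "cmod \<rho> \<le> 1" unfolding \<rho>_def by (rule norm_phase_le)
  interpret fin: finite_measure "lebesgue_on {0..3::real}"
    by (rule finite_measure_lebesgue_on) auto
  have bnd: "cmod (F s) \<le> (\<Sum>m=1..R. bG k m)" if "s \<in> {0..3}" for s
    unfolding F_def
  proof (rule order_trans[OF norm_sum], rule sum_mono)
    fix m
    have "cmod (phase (z - ((1 - of_real (sig s)) * W + of_real (sig s) * P)) ^ m * cG k m \<rho> s)
        \<le> 1 * bG k m"
      unfolding norm_mult norm_power
      using bound_cG[OF rho1 that, of k m] norm_phase_le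
      by (intro mult_mono power_le_one) auto
    then show "cmod (phase (z - ((1 - of_real (sig s)) * W + of_real (sig s) * P)) ^ m * cG k m \<rho> s) \<le> bG k m"
      by simp
  qed
  show int: "integrable (lebesgue_on {0..3}) F"
    apply (rule fin.integrable_const_bound[where B="\<Sum>m=1..R. bG k m"])
    apply (rule AE_I2) using bnd apply simp
    using measurable_compose[OF id_borel_measurable_lebesgue_on Fm] by (simp add: id_def)
  have h1: "(F has_integral (phase (z - P) ^ k * phase (z - W) -
       (\<Sum>m=1..R. cA k m \<rho> * phase (z - W) ^ m + cB k m \<rho> * phase (z - P) ^ m))) {0..1}"
  proof -
    have T: "((\<lambda>s. \<Sum>m=1..R. cD k m \<rho> s * phase (z - ((1 - of_real s) * W + of_real s * P)) ^ m) has_integral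
     (phase (z - P) ^ k * phase (z - W) - (\<Sum>m=1..R. cA k m \<rho> * phase (z - W) ^ m + cB k m \<rho> * phase (z - P) ^ m))) {0..1}"
      using two_point_HK[OF k R zW, of P] unfolding \<rho>_def .
    show ?thesis
      by (rule has_integral_spike_finite[OF finite.emptyI _ T]) (auto simp: F_def sig_def cG_def mult.commute)
  qed
  have h2: "(F has_integral (\<Sum>m=1..R. cA k m \<rho> * phase (z - W) ^ m)) {1..2}"
  proof -
    have "((\<lambda>s. \<Sum>m=1..R. cA k m \<rho> * phase (z - W) ^ m) has_integral (\<Sum>m=1..R. cA k m \<rho> * phase (z - W) ^ m)) {1..2::real}"
      using has_integral_const_real[of "\<Sum>m=1..R. cA k m \<rho> * phase (z - W) ^ m" 1 2] by simp
    note C = this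
    show ?thesis
      by (rule has_integral_spike_finite[where S="{1}", OF _ _ C])
         (auto simp: F_def sig_def cG_def mult.commute intro!: sum.cong)
  qed
  have h3: "(F has_integral (\<Sum>m=1..R. cB k m \<rho> * phase (z - P) ^ m)) {2..3}"
  proof -
    have "((\<lambda>s. \<Sum>m=1..R. cB k m \<rho> * phase (z - P) ^ m) has_integral (\<Sum>m=1..R. cB k m \<rho> * phase (z - P) ^ m)) {2..3::real}"
      using has_integral_const_real[of "\<Sum>m=1..R. cB k m \<rho> * phase (z - P) ^ m" 2 3] by simp
    note C = this
    show ?thesis
      by (rule has_integral_spike_finite[where S="{2}", OF _ _ C])
         (auto simp: F_def sig_def cG_def mult.commute intro!: sum.cong)
  qed
  have "(F has_integral (phase (z - P) ^ k * phase (z - W))) {0..3}"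
  proof -
    have "(F has_integral ((phase (z - P) ^ k * phase (z - W) -
       (\<Sum>m=1..R. cA k m \<rho> * phase (z - W) ^ m + cB k m \<rho> * phase (z - P) ^ m))
       + ((\<Sum>m=1..R. cA k m \<rho> * phase (z - W) ^ m) + (\<Sum>m=1..R. cB k m \<rho> * phase (z - P) ^ m)))) {0..3}"
      by (intro has_integral_combine[OF _ _ h1] has_integral_combine[OF _ _ h2 h3]) auto
    then show ?thesis by (simp add: sum.distrib)
  qed
  moreover have "(F has_integral integral\<^sup>L (lebesgue_on {0..3}) F) {0..3}"
    by (rule has_integral_integral_lebesgue_on[OF int]) auto
  ultimately show "integral\<^sup>L (lebesgue_on {0..3}) F = phase (z - P) ^ k * phase (z - W)"
    using has_integral_unique by blast
qed

definition tden :: "'a measure \<Rightarrow> ('a \<Rightarrow> 'b::topological_space) \<Rightarrow> ('a \<Rightarrow> real) \<Rightarrow> 'b \<Rightarrow> real" where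
  "tden M T f = (\<lambda>t. enn2real (RN_deriv (distr M borel T) (distr (density M (\<lambda>x. ennreal (f x))) borel T) t))"

lemma tden_props:
  fixes M :: "'a measure" and T :: "'a \<Rightarrow> 'c::{second_countable_topology}" and f :: "'a \<Rightarrow> real"
  assumes fin: "finite_measure M" and Tm[measurable]: "T \<in> M \<rightarrow>\<^sub>M borel"
    and fm[measurable]: "f \<in> borel_measurable M" and fnn: "\<And>x. x \<in> space M \<Longrightarrow> 0 \<le> f x"
    and fi: "integrable M f"
  defines "\<nu> \<equiv> distr M borel T"
  shows "tden M T f \<in> borel_measurable borel" "\<And>t. 0 \<le> tden M T f t"
    and "\<And>g::'c \<Rightarrow> 'b::{banach,second_countable_topology}. g \<in> borel_measurable borel \<Longrightarrow> (\<And>t. norm (g t) \<le> 1) \<Longrightarrow>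
          integrable \<nu> (\<lambda>t. tden M T f t *\<^sub>R g t) \<and>
          (\<integral>t. tden M T f t *\<^sub>R g t \<partial>\<nu>) = (\<integral>x. f x *\<^sub>R g (T x) \<partial>M)"
    and "integrable \<nu> (tden M T f)" "(\<integral>t. tden M T f t \<partial>\<nu>) = (\<integral>x. f x \<partial>M)"
proof -
  interpret M: finite_measure M by fact
  define DM where "DM = density M (\<lambda>x. ennreal (f x))"
  define N where "N = distr DM borel T"
  have sN: "sets N = sets \<nu>" by (simp add: N_def \<nu>_def)
  interpret nu: finite_measure \<nu> unfolding \<nu>_def by (rule M.finite_measure_distr) simp
  have "(\<integral>\<^sup>+x. ennreal (f x) \<partial>M) = (\<integral>\<^sup>+x. ennreal \<bar>f x\<bar> \<partial>M)"
    by (rule nn_integral_cong) (use fnn in simp)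
  then have "(\<integral>\<^sup>+x. ennreal (f x) \<partial>M) < \<infinity>"
    using fi by (simp add: integrable_iff_bounded less_top)
  then have "emeasure DM (space DM) \<noteq> \<infinity>"
    by (simp add: DM_def emeasure_density)
  then interpret DM: finite_measure DM by (rule finite_measureI)
  have TDM[measurable]: "T \<in> DM \<rightarrow>\<^sub>M borel" by (simp add: DM_def)
  interpret N: finite_measure N unfolding N_def by (rule DM.finite_measure_distr) simp
  have ac: "absolutely_continuous \<nu> N"
    unfolding absolutely_continuous_def
  proof
    fix A assume A: "A \<in> null_sets \<nu>"
    then have As: "A \<in> sets borel" unfolding \<nu>_def using null_setsD2 by fastforce
    have "emeasure M (T -` A \<inter> space M) = 0" using A As by (simp add: \<nu>_def emeasure_distr[OF Tm As] null_sets_def)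
    then have "T -` A \<inter> space M \<in> null_sets M" using As by (simp add: null_sets_def)
    then have "T -` A \<inter> space M \<in> null_sets DM"
      using absolutely_continuousI_density[of "\<lambda>x. ennreal (f x)" M] unfolding DM_def absolutely_continuous_def by auto
    then show "A \<in> null_sets N" using As TDM by (simp add: N_def null_sets_def emeasure_distr DM_def)
  qed
  have dRN: "density \<nu> (RN_deriv \<nu> N) = N"
    by (rule nu.density_RN_deriv[OF ac sN])
  have fin_RN: "AE t in \<nu>. RN_deriv \<nu> N t \<noteq> \<infinity>"
    by (rule nu.RN_deriv_finite[OF _ ac sN]) (unfold_locales)
  have td: "tden M T f = (\<lambda>t. enn2real (RN_deriv \<nu> N t))"
    by (simp add: tden_def \<nu>_def N_def DM_def)
  show tm: "tden M T f \<in> borel_measurable borel"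
    unfolding td by (simp add: \<nu>_def)
  show tnn: "\<And>t. 0 \<le> tden M T f t" unfolding td by simp
  have tmnu[measurable]: "tden M T f \<in> borel_measurable \<nu>" using tm by (simp add: \<nu>_def)
  have dens: "density \<nu> (\<lambda>t. ennreal (tden M T f t)) = N"
  proof -
    have "density \<nu> (\<lambda>t. ennreal (tden M T f t)) = density \<nu> (RN_deriv \<nu> N)"
      by (rule density_cong) (use fin_RN in \<open>auto simp: td ennreal_enn2real_if\<close>)
    then show ?thesis using dRN by simp
  qed
  have main: "integrable \<nu> (\<lambda>t. tden M T f t *\<^sub>R g t) \<and>
          (\<integral>t. tden M T f t *\<^sub>R g t \<partial>\<nu>) = (\<integral>x. f x *\<^sub>R g (T x) \<partial>M)"
    if gm: "g \<in> borel_measurable borel" and gb: "\<And>t. norm (g t) \<le> (1::real)" for g :: "'c \<Rightarrow> 'd::{banach,second_countable_topology}"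
  proof
    have gN[measurable]: "g \<in> borel_measurable N" using gm by (simp add: N_def)
    have gnu[measurable]: "g \<in> borel_measurable \<nu>" using gm by (simp add: \<nu>_def)
    have "integrable N g"
      by (rule N.integrable_const_bound[where B=1]) (use gb in auto)
    then have "integrable (density \<nu> (\<lambda>t. ennreal (tden M T f t))) g" using dens by simp
    then show "integrable \<nu> (\<lambda>t. tden M T f t *\<^sub>R g t)"
      by (subst (asm) integrable_density) (use tnn in auto)
    have "(\<integral>t. tden M T f t *\<^sub>R g t \<partial>\<nu>) = integral\<^sup>L (density \<nu> (\<lambda>t. ennreal (tden M T f t))) g"
      by (subst integral_density) (use tnn in auto)
    also have "\<dots> = integral\<^sup>L N g" using dens by simp
    also have "\<dots> = (\<integral>x. g (T x) \<partial>DM)" unfolding N_def by (rule integral_distr) (simp_all add: gm)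
    also have "\<dots> = (\<integral>x. f x *\<^sub>R g (T x) \<partial>M)" unfolding DM_def
      by (subst integral_density) (use fnn measurable_compose[OF Tm gm] in \<open>auto intro!: AE_I2\<close>)
    finally show "(\<integral>t. tden M T f t *\<^sub>R g t \<partial>\<nu>) = (\<integral>x. f x *\<^sub>R g (T x) \<partial>M)" .
  qed
  then show "\<And>g::'c \<Rightarrow> 'b::{banach,second_countable_topology}. g \<in> borel_measurable borel \<Longrightarrow> (\<And>t. norm (g t) \<le> 1) \<Longrightarrow>
          integrable \<nu> (\<lambda>t. tden M T f t *\<^sub>R g t) \<and>
          (\<integral>t. tden M T f t *\<^sub>R g t \<partial>\<nu>) = (\<integral>x. f x *\<^sub>R g (T x) \<partial>M)" by blast
  from main[of "\<lambda>_. 1::real"] show "integrable \<nu> (tden M T f)" "(\<integral>t. tden M T f t \<partial>\<nu>) = (\<integral>x. f x \<partial>M)"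
    by auto
qed

lemma transfer:
  fixes M :: "'a measure" and T :: "'a \<Rightarrow> 'c::second_countable_topology" and h0 :: "'a \<Rightarrow> complex"
  assumes fin: "finite_measure M" and Tm[measurable]: "T \<in> M \<rightarrow>\<^sub>M borel" and h0: "integrable M h0"
  shows "\<exists>h. h \<in> borel_measurable borel \<and> integrable (distr M borel T) h \<and>
     (\<integral>t. cmod (h t) \<partial>distr M borel T) \<le> 4 * (\<integral>x. cmod (h0 x) \<partial>M) \<and>
     (\<forall>g. g \<in> borel_measurable borel \<longrightarrow> (\<forall>t. cmod (g t) \<le> 1) \<longrightarrow>
        (\<integral>t. g t * h t \<partial>distr M borel T) = (\<integral>x. g (T x) * h0 x \<partial>M))"
proof -
  define \<nu> where "\<nu> = distr M borel T"
  have h0m[measurable]: "h0 \<in> borel_measurable M" using h0 by auto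
  define f where "f = (\<lambda>i::nat. \<lambda>x. if i = 1 then max 0 (Re (h0 x)) else if i = 2 then max 0 (- Re (h0 x))
      else if i = 3 then max 0 (Im (h0 x)) else max 0 (- Im (h0 x)))"
  have fm[measurable]: "f i \<in> borel_measurable M" for i unfolding f_def by measurable
  have fnn: "0 \<le> f i x" for i x unfolding f_def by auto
  have fle: "f i x \<le> cmod (h0 x)" for i x
    using abs_Re_le_cmod[of "h0 x"] abs_Im_le_cmod[of "h0 x"] unfolding f_def by auto
  have fi: "integrable M (f i)" for i
    by (rule Bochner_Integration.integrable_bound[OF integrable_norm[OF h0]]) (use fle fnn in \<open>auto intro!: AE_I2\<close>)
  define r where "r = (\<lambda>i. tden M T (f i))"
  note P = tden_props[OF fin Tm fm, of _ , OF fnn fi, folded \<nu>_def r_def]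
  have rm[measurable]: "r i \<in> borel_measurable borel" for i using P(1) by (simp add: r_def)
  have rnn: "0 \<le> r i t" for i t using P(2) by (simp add: r_def)
  have ri: "integrable \<nu> (r i)" for i using P(4) by (simp add: r_def)
  have rint: "(\<integral>t. r i t \<partial>\<nu>) = (\<integral>x. f i x \<partial>M)" for i using P(5) by (simp add: r_def)
  have rg: "integrable \<nu> (\<lambda>t. r i t *\<^sub>R g t) \<and> (\<integral>t. r i t *\<^sub>R g t \<partial>\<nu>) = (\<integral>x. f i x *\<^sub>R g (T x) \<partial>M)"
    if "g \<in> borel_measurable borel" "\<And>t. cmod (g t) \<le> 1" for i and g :: "'c \<Rightarrow> complex"
    using P(3)[OF that] by (simp add: r_def)
  define h where "h = (\<lambda>t. (of_real (r 1 t) - of_real (r 2 t)) + \<i> * (of_real (r 3 t) - of_real (r 4 t)))"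
  have h0eq: "h0 x = (of_real (f 1 x) - of_real (f 2 x)) + \<i> * (of_real (f 3 x) - of_real (f 4 x))" for x
    by (rule complex_eqI) (auto simp: f_def max_def)
  have hm: "h \<in> borel_measurable borel" unfolding h_def by measurable
  have hi: "integrable \<nu> h" unfolding h_def using ri by auto
  have tv: "(\<integral>t. cmod (h t) \<partial>\<nu>) \<le> 4 * (\<integral>x. cmod (h0 x) \<partial>M)"
  proof -
    have "(\<integral>t. cmod (h t) \<partial>\<nu>) \<le> (\<integral>t. r 1 t + r 2 t + r 3 t + r 4 t \<partial>\<nu>)"
    proof (rule integral_mono)
      show "integrable \<nu> (\<lambda>t. cmod (h t))" using hi by auto
      show "integrable \<nu> (\<lambda>t. r 1 t + r 2 t + r 3 t + r 4 t)" using ri by auto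
      fix t
      have "cmod (h t) \<le> cmod (of_real (r 1 t) - of_real (r 2 t)) + cmod (\<i> * (of_real (r 3 t) - of_real (r 4 t)))"
        unfolding h_def by (rule norm_triangle_ineq)
      also have "\<dots> \<le> r 1 t + r 2 t + r 3 t + r 4 t"
        using rnn[of 1 t] rnn[of 2 t] rnn[of 3 t] rnn[of 4 t]
        by (simp add: norm_mult) (smt (verit) norm_of_real norm_triangle_ineq4)
      finally show "cmod (h t) \<le> r 1 t + r 2 t + r 3 t + r 4 t" .
    qed
    also have "\<dots> = (\<integral>x. f 1 x \<partial>M) + (\<integral>x. f 2 x \<partial>M) + (\<integral>x. f 3 x \<partial>M) + (\<integral>x. f 4 x \<partial>M)"
      using ri rint by simp
    also have "\<dots> \<le> 4 * (\<integral>x. cmod (h0 x) \<partial>M)"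
    proof -
      have "(\<integral>x. f i x \<partial>M) \<le> (\<integral>x. cmod (h0 x) \<partial>M)" for i
        by (rule integral_mono) (use fi h0 fle in auto)
      from this[of 1] this[of 2] this[of 3] this[of 4] show ?thesis by simp
    qed
    finally show ?thesis .
  qed
  have eq: "(\<integral>t. g t * h t \<partial>\<nu>) = (\<integral>x. g (T x) * h0 x \<partial>M)"
    if gm: "g \<in> borel_measurable borel" and gb: "\<forall>t. cmod (g t) \<le> 1" for g
  proof -
    note R = rg[OF gm] gb
    have gTm[measurable]: "(\<lambda>x. g (T x)) \<in> borel_measurable M" using measurable_compose[OF Tm gm] by simp
    have fgi: "integrable M (\<lambda>x. f i x *\<^sub>R g (T x))" for i
      by (rule Bochner_Integration.integrable_bound[OF fi[of i]]) (use gb fnn in \<open>auto intro!: AE_I2 simp: mult_le_cancel_left1 mult_left_le\<close>)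
    have "(\<integral>t. g t * h t \<partial>\<nu>) = (\<integral>t. (r 1 t *\<^sub>R g t - r 2 t *\<^sub>R g t) + \<i> * (r 3 t *\<^sub>R g t - r 4 t *\<^sub>R g t) \<partial>\<nu>)"
      by (rule Bochner_Integration.integral_cong) (auto simp: h_def scaleR_conv_of_real algebra_simps)
    also have "\<dots> = ((\<integral>t. r 1 t *\<^sub>R g t \<partial>\<nu>) - (\<integral>t. r 2 t *\<^sub>R g t \<partial>\<nu>)) + \<i> * ((\<integral>t. r 3 t *\<^sub>R g t \<partial>\<nu>) - (\<integral>t. r 4 t *\<^sub>R g t \<partial>\<nu>))"
      using R by simp
    also have "\<dots> = ((\<integral>x. f 1 x *\<^sub>R g (T x) \<partial>M) - (\<integral>x. f 2 x *\<^sub>R g (T x) \<partial>M)) + \<i> * ((\<integral>x. f 3 x *\<^sub>R g (T x) \<partial>M) - (\<integral>x. f 4 x *\<^sub>R g (T x) \<partial>M))"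
      using R by simp
    also have "\<dots> = (\<integral>x. (f 1 x *\<^sub>R g (T x) - f 2 x *\<^sub>R g (T x)) + \<i> * (f 3 x *\<^sub>R g (T x) - f 4 x *\<^sub>R g (T x)) \<partial>M)"
      using fgi by simp
    also have "\<dots> = (\<integral>x. g (T x) * h0 x \<partial>M)"
      by (rule Bochner_Integration.integral_cong) (auto simp: h0eq scaleR_conv_of_real algebra_simps)
    finally show ?thesis .
  qed
  show ?thesis using hm hi tv eq unfolding \<nu>_def by blast
qed

definition dotw :: "complex ^ 'n \<Rightarrow> real ^ 'n \<Rightarrow> complex" where
  "dotw w t = (\<Sum>j\<in>UNIV. complex_of_real (t $ j) * w $ j)"

lemma dotw_comb:
  "dotw w ((1 - r) *\<^sub>R axis i 1 + r *\<^sub>R t) = (1 - of_real r) * w $ i + of_real r * dotw w t"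
proof -
  have "dotw w ((1 - r) *\<^sub>R axis i 1 + r *\<^sub>R t) =
     (\<Sum>j\<in>UNIV. (1 - of_real r) * (of_real (axis i 1 $ j) * w $ j)) + (\<Sum>j\<in>UNIV. of_real r * (of_real (t $ j) * w $ j))"
    unfolding dotw_def by (simp add: sum.distrib[symmetric] algebra_simps)
  also have "(\<Sum>j\<in>UNIV. of_real (axis i 1 $ j) * w $ j) = w $ i"
  proof -
    have "(\<Sum>j\<in>UNIV. of_real (axis i 1 $ j) * w $ j) = (\<Sum>j\<in>UNIV. if j = i then w $ j else 0)"
      by (rule sum.cong) (auto simp: axis_def)
    then show ?thesis by simp
  qed
  ultimately show ?thesis by (simp add: sum_distrib_left[symmetric] dotw_def)
qed

lemma dotw_axis: "dotw w (axis i 1) = w $ i"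
  using dotw_comb[of w 0 i "axis i 1"] by simp

lemma continuous_dotw: "continuous_on UNIV (dotw w)"
  unfolding dotw_def by (intro continuous_intros)

lemma measurable_dotw[measurable]: "dotw w \<in> borel_measurable borel"
  by (rule borel_measurable_continuous_onI[OF continuous_dotw])

lemma closed_simplex: "closed (std_simplex :: (real^'n) set)"
  unfolding std_simplex_def
  by (intro closed_Collect_conj closed_Collect_all closed_Collect_le closed_Collect_eq continuous_intros)

lemma simplex_borel[measurable]: "(std_simplex :: (real^'n) set) \<in> sets borel"
  by (rule borel_closed[OF closed_simplex])

lemma axis_simplex: "axis i 1 \<in> std_simplex"
  by (auto simp: std_simplex_def axis_def if_distrib cong: if_cong)

lemma comb_simplex:
  assumes "t \<in> std_simplex" "0 \<le> r" "r \<le> 1"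
  shows "(1 - r) *\<^sub>R axis i 1 + r *\<^sub>R t \<in> std_simplex"
proof -
  have "(\<Sum>j\<in>UNIV. ((1 - r) *\<^sub>R axis i 1 + r *\<^sub>R t) $ j) = (1 - r) * (\<Sum>j\<in>UNIV. axis i 1 $ j) + r * (\<Sum>j\<in>UNIV. t $ j)"
    by (simp add: sum.distrib sum_distrib_left)
  also have "\<dots> = 1" using assms(1) axis_simplex[of i] by (simp add: std_simplex_def)
  finally show ?thesis using assms axis_simplex[of i]
    unfolding std_simplex_def by (auto intro!: add_nonneg_nonneg mult_nonneg_nonneg)
qed

lemma measurable_snd_lebesgue_on[measurable]:
  "(\<lambda>x. snd x) \<in> borel_measurable (N \<Otimes>\<^sub>M lebesgue_on S)"
  using measurable_compose[OF measurable_snd id_borel_measurable_lebesgue_on] by (simp add: id_def)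

lemma prod_int:
  fixes \<nu> :: "'a measure" and L :: "'b measure" and a :: "'a \<Rightarrow> complex" and b :: "'a \<times> 'b \<Rightarrow> complex"
  assumes fn: "finite_measure \<nu>" and fL: "finite_measure L"
    and ai: "integrable \<nu> a" and bm: "b \<in> borel_measurable (\<nu> \<Otimes>\<^sub>M L)"
    and bb: "\<And>x. x \<in> space (\<nu> \<Otimes>\<^sub>M L) \<Longrightarrow> cmod (b x) \<le> B"
  shows "integrable (\<nu> \<Otimes>\<^sub>M L) (\<lambda>x. a (fst x) * b x)"
    and "(\<integral>x. cmod (a (fst x) * b x) \<partial>(\<nu> \<Otimes>\<^sub>M L)) \<le> B * measure L (space L) * (\<integral>t. cmod (a t) \<partial>\<nu>)"
proof -
  interpret n: finite_measure \<nu> by fact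
  interpret l: finite_measure L by fact
  interpret p: pair_sigma_finite \<nu> L by unfold_locales
  have am[measurable]: "a \<in> borel_measurable \<nu>" using ai by auto
  have bm'[measurable]: "b \<in> borel_measurable (\<nu> \<Otimes>\<^sub>M L)" by fact
  have i1: "integrable (\<nu> \<Otimes>\<^sub>M L) (\<lambda>x. a (fst x))"
  proof (rule p.Fubini_integrable)
    show "(\<lambda>x. a (fst x)) \<in> borel_measurable (\<nu> \<Otimes>\<^sub>M L)" by measurable
    show "integrable \<nu> (\<lambda>x. \<integral>y. norm (a (fst (x, y))) \<partial>L)" using ai by simp
    show "AE x in \<nu>. integrable L (\<lambda>y. a (fst (x, y)))" by simp
  qed
  have Bnn: "0 \<le> B" if "space (\<nu> \<Otimes>\<^sub>M L) \<noteq> {}" using bb that norm_ge_zero order_trans by blast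
  have bnd: "cmod (a (fst x) * b x) \<le> B * cmod (a (fst x))" if "x \<in> space (\<nu> \<Otimes>\<^sub>M L)" for x
    using mult_right_mono[OF bb[OF that] norm_ge_zero[of "a (fst x)"]] by (simp add: norm_mult mult.commute)
  have i2: "integrable (\<nu> \<Otimes>\<^sub>M L) (\<lambda>x. B * cmod (a (fst x)))" using i1 by auto
  have bnd2: "cmod (a (fst x) * b x) \<le> norm (B * cmod (a (fst x)))" if "x \<in> space (\<nu> \<Otimes>\<^sub>M L)" for x
    using bnd[OF that] mult_right_mono[OF abs_ge_self norm_ge_zero, of B "a (fst x)"]
    by (simp add: abs_mult)
  show int: "integrable (\<nu> \<Otimes>\<^sub>M L) (\<lambda>x. a (fst x) * b x)"
    by (rule Bochner_Integration.integrable_bound[OF i2]) (use bnd2 in \<open>auto intro!: AE_I2\<close>)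
  have "(\<integral>x. cmod (a (fst x) * b x) \<partial>(\<nu> \<Otimes>\<^sub>M L)) \<le> (\<integral>x. B * cmod (a (fst x)) \<partial>(\<nu> \<Otimes>\<^sub>M L))"
    by (rule integral_mono) (use int i2 bnd in auto)
  also have "\<dots> = (\<integral>t. (\<integral>s. B * cmod (a (fst (t, s))) \<partial>L) \<partial>\<nu>)"
    by (rule p.integral_fst'[symmetric]) (rule i2)
  also have "\<dots> = B * measure L (space L) * (\<integral>t. cmod (a t) \<partial>\<nu>)"
    by (simp add: mult_ac)
  finally show "(\<integral>x. cmod (a (fst x) * b x) \<partial>(\<nu> \<Otimes>\<^sub>M L)) \<le> B * measure L (space L) * (\<integral>t. cmod (a t) \<partial>\<nu>)" .
qed

definition Inv :: "'n::finite set \<Rightarrow> bool" where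
  "Inv S \<longleftrightarrow> (\<exists>C::real. \<forall>w::complex^'n. \<exists>(\<nu>::(real^'n) measure) (h::nat \<Rightarrow> real^'n \<Rightarrow> complex).
     finite_measure \<nu> \<and> sets \<nu> = sets borel \<and> emeasure \<nu> (UNIV - std_simplex) = 0 \<and>
     (\<forall>m\<in>{1..card S}. h m \<in> borel_measurable borel \<and> integrable \<nu> (h m) \<and> (\<integral>t. cmod (h m t) \<partial>\<nu>) \<le> C) \<and>
     (\<forall>z. (\<forall>j\<in>S. z \<noteq> w $ j) \<longrightarrow>
        (\<Prod>j\<in>S. phase (z - w $ j)) = (\<Sum>m=1..card S. \<integral>t. phase (z - dotw w t) ^ m * h m t \<partial>\<nu>)))"

lemma bG_nonneg: "0 \<le> bG k m"
  unfolding bG_def by (intro add_nonneg_nonneg sum_nonneg) auto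

lemma int_bdd:
  fixes f g :: "'a \<Rightarrow> complex"
  assumes f: "integrable M f" and g: "g \<in> borel_measurable M" and b: "\<And>x. x \<in> space M \<Longrightarrow> cmod (g x) \<le> 1"
  shows "integrable M (\<lambda>x. g x * f x)"
proof (rule Bochner_Integration.integrable_bound[OF f])
  show "(\<lambda>x. g x * f x) \<in> borel_measurable M" using f g by auto
  show "AE x in M. norm (g x * f x) \<le> norm (f x)"
    using b by (intro AE_I2) (auto simp: norm_mult intro: mult_left_le_one_le)
qed

lemma norm_phase_pow_le: "cmod (phase x ^ m) \<le> 1"
  by (simp add: norm_power power_le_one norm_phase_le)

lemma step:
  fixes S :: "'n::finite set"
  assumes iS: "i \<notin> S" and Sne: "S \<noteq> {}" and IS: "Inv S"
  shows "Inv (insert i S)"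
proof -
  define N where "N = card S"
  have N1: "1 \<le> N" using Sne by (simp add: N_def Suc_le_eq card_gt_0_iff)
  have cardI: "card (insert i S) = N + 1" using iS by (simp add: N_def)
  obtain C where C: "\<forall>w::complex^'n. \<exists>(\<nu>::(real^'n) measure) (h::nat \<Rightarrow> real^'n \<Rightarrow> complex).
     finite_measure \<nu> \<and> sets \<nu> = sets borel \<and> emeasure \<nu> (UNIV - std_simplex) = 0 \<and>
     (\<forall>m\<in>{1..N}. h m \<in> borel_measurable borel \<and> integrable \<nu> (h m) \<and> (\<integral>t. cmod (h m t) \<partial>\<nu>) \<le> C) \<and>
     (\<forall>z. (\<forall>j\<in>S. z \<noteq> w $ j) \<longrightarrow>
        (\<Prod>j\<in>S. phase (z - w $ j)) = (\<Sum>m=1..N. \<integral>t. phase (z - dotw w t) ^ m * h m t \<partial>\<nu>))"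
    using IS unfolding Inv_def N_def[symmetric] by (elim exE) (rule that)
  define B where "B = (\<Sum>m=1..N. \<Sum>m'=1..N+1. bG m m')"
  have bGB: "bG m m' \<le> B" if "m \<in> {1..N}" "m' \<in> {1..N+1}" for m m'
  proof -
    have "bG m m' \<le> (\<Sum>m'=1..N+1. bG m m')"
      by (rule member_le_sum[OF that(2)]) (simp_all add: bG_nonneg)
    also have "\<dots> \<le> B" unfolding B_def
    proof (rule member_le_sum[of _ _ "\<lambda>m. \<Sum>m'=1..N+1. bG m m'"])
      show "\<And>x. x \<in> {1..N} - {m} \<Longrightarrow> 0 \<le> (\<Sum>m'=1..N+1. bG x m')" by (intro sum_nonneg bG_nonneg)
    qed (use that in simp_all)
    finally show ?thesis .
  qed
  have Bnn: "0 \<le> B" unfolding B_def by (intro sum_nonneg bG_nonneg)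
  show ?thesis unfolding Inv_def cardI
  proof (intro exI[of _ "12 * real N * B * C"] allI)
    fix w :: "complex^'n"
    obtain \<nu> :: "(real^'n) measure" and h :: "nat \<Rightarrow> real^'n \<Rightarrow> complex" where
      fn: "finite_measure \<nu>" and s\<nu>: "sets \<nu> = sets borel" and supp: "emeasure \<nu> (UNIV - std_simplex) = 0"
      and hprop: "\<forall>m\<in>{1..N}. h m \<in> borel_measurable borel \<and> integrable \<nu> (h m) \<and> (\<integral>t. cmod (h m t) \<partial>\<nu>) \<le> C"
      and ident: "\<forall>z. (\<forall>j\<in>S. z \<noteq> w $ j) \<longrightarrow>
        (\<Prod>j\<in>S. phase (z - w $ j)) = (\<Sum>m=1..N. \<integral>t. phase (z - dotw w t) ^ m * h m t \<partial>\<nu>)"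
      using spec[OF C, of w] by (elim exE conjE) (rule that; assumption)
    define L where "L = lebesgue_on {0..3::real}"
    define M where "M = \<nu> \<Otimes>\<^sub>M L"
    define \<rho> where "\<rho> = (\<lambda>t. phase (w $ i - dotw w t))"
    define T where "T = (\<lambda>x::(real^'n) \<times> real. if fst x \<in> std_simplex then (1 - sig (snd x)) *\<^sub>R axis i 1 + sig (snd x) *\<^sub>R fst x else axis i (1::real))"
    define H where "H = (\<lambda>m' x. \<Sum>m=1..N. h m (fst x) * cG m m' (\<rho> (fst x)) (snd x))"
    interpret n: finite_measure \<nu> by fact
    have fL: "finite_measure L" unfolding L_def by (rule finite_measure_lebesgue_on) auto
    interpret l: finite_measure L by fact
    interpret p: pair_sigma_finite \<nu> L by unfold_locales
    have fM: "finite_measure M" unfolding M_def by (rule finite_measure_pair_measure) unfold_locales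
    interpret mm: finite_measure M by fact
    have measL: "measure L (space L) = 3"
      by (simp add: L_def measure_restrict_space)
    have spM: "space M = UNIV \<times> {0..3}"
      by (simp add: M_def L_def space_pair_measure sets_eq_imp_space_eq[OF s\<nu>])
    have setsM: "sets M = sets (borel \<Otimes>\<^sub>M L)" unfolding M_def by (rule sets_pair_measure_cong[OF s\<nu> refl])
    have measM: "f \<in> borel_measurable M" if "f \<in> borel_measurable (borel \<Otimes>\<^sub>M L)" for f :: "_ \<Rightarrow> 'z::topological_space"
      by (subst measurable_cong_sets[OF setsM refl]) (rule that)
    have hm: "h m \<in> borel_measurable borel" if "m \<in> {1..N}" for m using hprop that by blast
    have hi: "integrable \<nu> (h m)" if "m \<in> {1..N}" for m using hprop that by blast
    have hC: "(\<integral>t. cmod (h m t) \<partial>\<nu>) \<le> C" if "m \<in> {1..N}" for m using hprop that by blast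
    have Tm: "T \<in> M \<rightarrow>\<^sub>M borel"
      by (rule measM) (unfold T_def L_def, measurable)
    have \<rho>m[measurable]: "\<rho> \<in> borel_measurable borel" unfolding \<rho>_def by measurable
    have Hm: "H m' \<in> borel_measurable M" for m'
      unfolding H_def
    proof (intro measM borel_measurable_sum borel_measurable_times)
      fix m assume m: "m \<in> {1..N}"
      show "(\<lambda>x. h m (fst x)) \<in> borel_measurable (borel \<Otimes>\<^sub>M L)"
        using measurable_compose[OF measurable_fst[of borel L] hm[OF m]] by (simp add: o_def)
      have f1: "(\<lambda>x. \<rho> (fst x)) \<in> borel_measurable (borel \<Otimes>\<^sub>M L)"
        using measurable_compose[OF measurable_fst[of borel L] \<rho>m] by (simp add: o_def)
      have f2: "(\<lambda>x. snd x) \<in> borel_measurable (borel \<Otimes>\<^sub>M L)"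
        unfolding L_def by (rule measurable_snd_lebesgue_on)
      show "(\<lambda>x. cG m m' (\<rho> (fst x)) (snd x)) \<in> borel_measurable (borel \<Otimes>\<^sub>M L)"
        by (rule measurable_cG[OF f1 f2])
    qed
    have Tsimp: "T x \<in> std_simplex" if "x \<in> space M" for x
      using that comb_simplex[of "fst x" "sig (snd x)" i] sig_range[of "snd x"] axis_simplex[of i]
      by (auto simp: T_def spM)
    have bm: "(\<lambda>x. cG m m' (\<rho> (fst x)) (snd x)) \<in> borel_measurable M" for m m'
    proof (rule measM)
      have f1: "(\<lambda>x. \<rho> (fst x)) \<in> borel_measurable (borel \<Otimes>\<^sub>M L)"
        using measurable_compose[OF measurable_fst[of borel L] \<rho>m] by (simp add: o_def)
      have f2: "(\<lambda>x. snd x) \<in> borel_measurable (borel \<Otimes>\<^sub>M L)"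
        unfolding L_def by (rule measurable_snd_lebesgue_on)
      show "(\<lambda>x. cG m m' (\<rho> (fst x)) (snd x)) \<in> borel_measurable (borel \<Otimes>\<^sub>M L)"
        by (rule measurable_cG[OF f1 f2])
    qed
    have bb: "cmod (cG m m' (\<rho> (fst x)) (snd x)) \<le> bG m m'" if "x \<in> space M" for m m' x
      using bound_cG[OF norm_phase_le[of "w $ i - dotw w (fst x)"], of "snd x" m m'] that unfolding \<rho>_def by (auto simp: spM)
    have termi: "integrable M (\<lambda>x. h m (fst x) * cG m m' (\<rho> (fst x)) (snd x))"
      and termb: "(\<integral>x. cmod (h m (fst x) * cG m m' (\<rho> (fst x)) (snd x)) \<partial>M) \<le> bG m m' * 3 * (\<integral>t. cmod (h m t) \<partial>\<nu>)"
      if "m \<in> {1..N}" for m m'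
      using prod_int[OF fn fL hi[OF that] bm[of m m', unfolded M_def], of "bG m m'"] bb[of _ m m'] measL
      unfolding M_def by auto
    have Hi: "integrable M (H m')" if "m' \<in> {1..N+1}" for m'
      unfolding H_def by (rule Bochner_Integration.integrable_sum) (rule termi)
    have Hb: "(\<integral>x. cmod (H m' x) \<partial>M) \<le> 3 * real N * B * C" if m': "m' \<in> {1..N+1}" for m'
    proof -
      have "(\<integral>x. cmod (H m' x) \<partial>M) \<le> (\<integral>x. (\<Sum>m=1..N. cmod (h m (fst x) * cG m m' (\<rho> (fst x)) (snd x))) \<partial>M)"
        unfolding H_def
        by (rule integral_mono) (use termi Hi[OF m'] in \<open>auto simp: H_def intro!: norm_sum\<close>)
      also have "\<dots> = (\<Sum>m=1..N. (\<integral>x. cmod (h m (fst x) * cG m m' (\<rho> (fst x)) (snd x)) \<partial>M))"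
        by (rule Bochner_Integration.integral_sum) (use termi in auto)
      also have "\<dots> \<le> (\<Sum>m=1..N. 3 * B * C)"
      proof (rule sum_mono)
        fix m assume m: "m \<in> {1..N}"
        have "bG m m' * 3 * (\<integral>t. cmod (h m t) \<partial>\<nu>) \<le> B * 3 * C"
          using bGB[OF m m'] hC[OF m] bG_nonneg[of m m'] Bnn
          by (intro mult_mono) auto
        then show "(\<integral>x. cmod (h m (fst x) * cG m m' (\<rho> (fst x)) (snd x)) \<partial>M) \<le> 3 * B * C"
          using termb[OF m, of m'] by simp
      qed
      also have "\<dots> = 3 * real N * B * C" by simp
      finally show ?thesis .
    qed
    have "\<forall>m'\<in>{1..N+1}. \<exists>h'. h' \<in> borel_measurable borel \<and> integrable (distr M borel T) h' \<and>
     (\<integral>t. cmod (h' t) \<partial>distr M borel T) \<le> 4 * (\<integral>x. cmod (H m' x) \<partial>M) \<and>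
     (\<forall>g. g \<in> borel_measurable borel \<longrightarrow> (\<forall>t. cmod (g t) \<le> 1) \<longrightarrow>
        (\<integral>t. g t * h' t \<partial>distr M borel T) = (\<integral>x. g (T x) * H m' x \<partial>M))"
      using transfer[OF fM Tm Hi] by blast
    then obtain h' where h': "\<forall>m'\<in>{1..N+1}. h' m' \<in> borel_measurable borel \<and> integrable (distr M borel T) (h' m') \<and>
     (\<integral>t. cmod (h' m' t) \<partial>distr M borel T) \<le> 4 * (\<integral>x. cmod (H m' x) \<partial>M) \<and>
     (\<forall>g. g \<in> borel_measurable borel \<longrightarrow> (\<forall>t. cmod (g t) \<le> 1) \<longrightarrow>
        (\<integral>t. g t * h' m' t \<partial>distr M borel T) = (\<integral>x. g (T x) * H m' x \<partial>M))"
      by (rule bchoice[elim_format]) blast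
    define \<nu>' where "\<nu>' = distr M borel T"
    have fn': "finite_measure \<nu>'" unfolding \<nu>'_def by (rule mm.finite_measure_distr[OF Tm])
    have s\<nu>': "sets \<nu>' = sets borel" by (simp add: \<nu>'_def)
    have supp': "emeasure \<nu>' (UNIV - std_simplex) = 0"
    proof -
      have "T -` (UNIV - std_simplex) \<inter> space M = {}" using Tsimp by auto
      then show ?thesis unfolding \<nu>'_def
        by (subst emeasure_distr[OF Tm]) auto
    qed
    have hprop': "\<forall>m\<in>{1..N + 1}. h' m \<in> borel_measurable borel \<and> integrable \<nu>' (h' m) \<and> (\<integral>t. cmod (h' m t) \<partial>\<nu>') \<le> 12 * real N * B * C"
    proof
      fix m' assume m': "m' \<in> {1..N+1}"
      then show "h' m' \<in> borel_measurable borel \<and> integrable \<nu>' (h' m') \<and> (\<integral>t. cmod (h' m' t) \<partial>\<nu>') \<le> 12 * real N * B * C"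
        using h' Hb[OF m'] unfolding \<nu>'_def by force
    qed
    have ident': "(\<Prod>j\<in>insert i S. phase (z - w $ j)) = (\<Sum>m=1..N + 1. \<integral>t. phase (z - dotw w t) ^ m * h' m t \<partial>\<nu>')"
      if z: "\<forall>j\<in>insert i S. z \<noteq> w $ j" for z
    proof -
      have zi: "z \<noteq> w $ i" using z by auto
      have zS: "\<forall>j\<in>S. z \<noteq> w $ j" using z by auto
      define g where "g = (\<lambda>m' t. phase (z - dotw w t) ^ m')"
      have gm: "g m' \<in> borel_measurable borel" for m' unfolding g_def by measurable
      have gb: "cmod (g m' t) \<le> 1" for m' t unfolding g_def by (rule norm_phase_pow_le)
      have gTm: "(\<lambda>x. g m' (T x)) \<in> borel_measurable M" for m'
        using measurable_compose[OF Tm gm] by (simp add: o_def)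
      have gHi: "integrable M (\<lambda>x. g m' (T x) * H m' x)" if "m' \<in> {1..N+1}" for m'
        by (rule int_bdd[OF Hi[OF that] gTm]) (rule gb)
      have simpAE: "AE t in \<nu>. t \<in> std_simplex"
        by (rule AE_I[where N="UNIV - std_simplex"]) (use supp s\<nu> in auto)
      define F where "F = (\<lambda>t m s. \<Sum>m'=1..N+1. phase (z - ((1 - of_real (sig s)) * w $ i + of_real (sig s) * dotw w t)) ^ m' * cG m m' (\<rho> t) s)"
      have inner: "(\<integral>s. (\<Sum>m'=1..N+1. g m' (T (t, s)) * H m' (t, s)) \<partial>L) =
          (\<Sum>m=1..N. h m t * (phase (z - dotw w t) ^ m * phase (z - w $ i)))" if t: "t \<in> std_simplex" for t
      proof -
        have Fint: "integrable L (F t m)" and Fval: "(\<integral>s. F t m s \<partial>L) = phase (z - dotw w t) ^ m * phase (z - w $ i)"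
          if m: "m \<in> {1..N}" for m
          using two_point_inner[of m "N+1" z "w $ i" "dotw w t"] m zi
          unfolding F_def L_def \<rho>_def by auto
        have "(\<integral>s. (\<Sum>m'=1..N+1. g m' (T (t, s)) * H m' (t, s)) \<partial>L) = (\<integral>s. (\<Sum>m=1..N. h m t * F t m s) \<partial>L)"
        proof (rule Bochner_Integration.integral_cong[OF refl])
          fix s
          have Tts: "dotw w (T (t, s)) = (1 - of_real (sig s)) * w $ i + of_real (sig s) * dotw w t"
            using t by (simp add: T_def dotw_comb)
          show "(\<Sum>m'=1..N+1. g m' (T (t, s)) * H m' (t, s)) = (\<Sum>m=1..N. h m t * F t m s)"
            unfolding g_def H_def F_def Tts fst_conv snd_conv sum_distrib_left
            by (subst sum.swap) (auto intro!: sum.cong simp: mult_ac)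
        qed
        also have "\<dots> = (\<Sum>m=1..N. (\<integral>s. h m t * F t m s \<partial>L))"
          by (rule Bochner_Integration.integral_sum) (use Fint in auto)
        also have "\<dots> = (\<Sum>m=1..N. h m t * (phase (z - dotw w t) ^ m * phase (z - w $ i)))"
          by (rule sum.cong) (use Fval in auto)
        finally show ?thesis .
      qed
      have intsum: "integrable M (\<lambda>x. \<Sum>m'=1..N+1. g m' (T x) * H m' x)"
        by (rule Bochner_Integration.integrable_sum) (rule gHi)
      have "(\<Sum>m=1..N + 1. \<integral>t. phase (z - dotw w t) ^ m * h' m t \<partial>\<nu>') =
            (\<Sum>m'=1..N + 1. \<integral>x. g m' (T x) * H m' x \<partial>M)"
      proof (rule sum.cong[OF refl])
        fix m' assume m': "m' \<in> {1..N+1}"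
        show "(\<integral>t. phase (z - dotw w t) ^ m' * h' m' t \<partial>\<nu>') = (\<integral>x. g m' (T x) * H m' x \<partial>M)"
          using h' m' gm[of m'] gb[of m'] unfolding \<nu>'_def g_def by blast
      qed
      also have "\<dots> = (\<integral>x. (\<Sum>m'=1..N+1. g m' (T x) * H m' x) \<partial>M)"
        by (rule Bochner_Integration.integral_sum[symmetric]) (rule gHi)
      also have "\<dots> = (\<integral>t. (\<integral>s. (\<Sum>m'=1..N+1. g m' (T (t, s)) * H m' (t, s)) \<partial>L) \<partial>\<nu>)"
        using p.integral_fst'[OF intsum[unfolded M_def]] unfolding M_def by simp
      also have "\<dots> = (\<integral>t. (\<Sum>m=1..N. phase (z - w $ i) * (phase (z - dotw w t) ^ m * h m t)) \<partial>\<nu>)"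
      proof (rule integral_cong_AE)
        show "(\<lambda>t. \<integral>s. (\<Sum>m'=1..N+1. g m' (T (t, s)) * H m' (t, s)) \<partial>L) \<in> borel_measurable \<nu>"
          using p.integrable_fst'[OF intsum[unfolded M_def]] by auto
        have "(\<lambda>t. \<Sum>m=1..N. phase (z - w $ i) * (phase (z - dotw w t) ^ m * h m t)) \<in> borel_measurable borel"
        proof (rule borel_measurable_sum)
          fix m assume m: "m \<in> {1..N}"
          note [measurable] = hm[OF m]
          show "(\<lambda>t. phase (z - w $ i) * (phase (z - dotw w t) ^ m * h m t)) \<in> borel_measurable borel"
            by measurable
        qed
        then show "(\<lambda>t. \<Sum>m=1..N. phase (z - w $ i) * (phase (z - dotw w t) ^ m * h m t)) \<in> borel_measurable \<nu>"
          by (simp add: measurable_cong_sets[OF s\<nu> refl])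
        show "AE t in \<nu>. (\<integral>s. (\<Sum>m'=1..N+1. g m' (T (t, s)) * H m' (t, s)) \<partial>L) =
            (\<Sum>m=1..N. phase (z - w $ i) * (phase (z - dotw w t) ^ m * h m t))"
        proof -
          have inner2: "(\<integral>s. (\<Sum>m'=1..N+1. g m' (T (t, s)) * H m' (t, s)) \<partial>L) =
            (\<Sum>m=1..N. phase (z - w $ i) * (phase (z - dotw w t) ^ m * h m t))" if "t \<in> std_simplex" for t
            unfolding inner[OF that] by (rule sum.cong) (simp_all add: mult_ac)
          show ?thesis using simpAE by eventually_elim (rule inner2)
        qed
      qed
      also have "\<dots> = (\<Sum>m=1..N. \<integral>t. phase (z - w $ i) * (phase (z - dotw w t) ^ m * h m t) \<partial>\<nu>)"
      proof (rule Bochner_Integration.integral_sum)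
        fix m assume m: "m \<in> {1..N}"
        have "integrable \<nu> (\<lambda>t. phase (z - dotw w t) ^ m * h m t)"
        proof (rule int_bdd[OF hi[OF m]])
          show "(\<lambda>t. phase (z - dotw w t) ^ m) \<in> borel_measurable \<nu>"
            by (simp add: measurable_cong_sets[OF s\<nu> refl])
        qed (rule norm_phase_pow_le)
        then show "integrable \<nu> (\<lambda>t. phase (z - w $ i) * (phase (z - dotw w t) ^ m * h m t))" by simp
      qed
      also have "\<dots> = phase (z - w $ i) * (\<Sum>m=1..N. \<integral>t. phase (z - dotw w t) ^ m * h m t \<partial>\<nu>)"
        by (simp add: sum_distrib_left)
      also have "\<dots> = phase (z - w $ i) * (\<Prod>j\<in>S. phase (z - w $ j))"
        using ident zS by simp
      also have "\<dots> = (\<Prod>j\<in>insert i S. phase (z - w $ j))"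
        using iS by simp
      finally show ?thesis by simp
    qed
    show "\<exists>\<nu> h. finite_measure \<nu> \<and> sets \<nu> = sets borel \<and> emeasure \<nu> (UNIV - std_simplex) = 0 \<and>
     (\<forall>m\<in>{1..N + 1}. h m \<in> borel_measurable borel \<and> integrable \<nu> (h m) \<and> (\<integral>t. cmod (h m t) \<partial>\<nu>) \<le> 12 * real N * B * C) \<and>
     (\<forall>z. (\<forall>j\<in>insert i S. z \<noteq> w $ j) \<longrightarrow>
        (\<Prod>j\<in>insert i S. phase (z - w $ j)) = (\<Sum>m=1..N + 1. \<integral>t. phase (z - dotw w t) ^ m * h m t \<partial>\<nu>))"
      using fn' s\<nu>' supp' hprop' ident' by blast
  qed
qed

lemma phase_mult: "phase (a * b) = phase a * phase b"
  by (simp add: phase_def)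

lemma phase_prod: "finite A \<Longrightarrow> phase (\<Prod>j\<in>A. f j) = (\<Prod>j\<in>A. phase (f j))"
  by (induction A rule: finite_induct) (simp_all add: phase_mult, simp add: phase_def)

lemma base:
  fixes i :: "'n::finite"
  shows "Inv {i}"
  unfolding Inv_def
proof (intro exI[of _ 1] allI)
  fix w :: "complex^'n"
  define \<nu> where "\<nu> = distr (count_space {()}) borel (\<lambda>_. axis i (1::real))"
  have cm: "(\<lambda>_. axis i (1::real)) \<in> count_space {()} \<rightarrow>\<^sub>M borel" by simp
  have fc: "finite_measure (count_space {()})" by (rule finite_measure_count_space) simp
  have fn: "finite_measure \<nu>" unfolding \<nu>_def by (rule finite_measure.finite_measure_distr[OF fc cm])
  have intv: "(\<integral>t. f t \<partial>\<nu>) = f (axis i 1)" if "f \<in> borel_measurable borel" for f :: "real^'n \<Rightarrow> 'b::{banach,second_countable_topology}"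
    unfolding \<nu>_def by (subst integral_distr[OF cm that]) (simp add: lebesgue_integral_count_space_finite)
  have "finite_measure \<nu>" by fact
  moreover have "sets \<nu> = sets borel" by (simp add: \<nu>_def)
  moreover have "emeasure \<nu> (UNIV - std_simplex) = 0"
    unfolding \<nu>_def using axis_simplex[of i] by (subst emeasure_distr[OF cm]) auto
  moreover have "\<forall>m\<in>{1..card {i}}. (\<lambda>_::real^'n. 1::complex) \<in> borel_measurable borel \<and> integrable \<nu> (\<lambda>_. 1::complex) \<and> (\<integral>t. cmod (1::complex) \<partial>\<nu>) \<le> 1"
    using intv[of "\<lambda>_. cmod (1::complex)"] finite_measure.integrable_const[OF fn] by simp
  moreover have "\<forall>z. (\<forall>j\<in>{i}. z \<noteq> w $ j) \<longrightarrow>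
        (\<Prod>j\<in>{i}. phase (z - w $ j)) = (\<Sum>m=1..card {i}. \<integral>t. phase (z - dotw w t) ^ m * 1 \<partial>\<nu>)"
  proof (intro allI impI)
    fix z
    have "(\<integral>t. phase (z - dotw w t) ^ 1 * 1 \<partial>\<nu>) = phase (z - dotw w (axis i 1))"
      using intv[of "\<lambda>t. phase (z - dotw w t) ^ 1 * 1"] by simp
    then show "(\<Prod>j\<in>{i}. phase (z - w $ j)) = (\<Sum>m=1..card {i}. \<integral>t. phase (z - dotw w t) ^ m * 1 \<partial>\<nu>)"
      by (simp add: dotw_axis)
  qed
  ultimately show "\<exists>\<nu> h. finite_measure \<nu> \<and> sets \<nu> = sets borel \<and> emeasure \<nu> (UNIV - std_simplex) = 0 \<and>
     (\<forall>m\<in>{1..card {i}}. h m \<in> borel_measurable borel \<and> integrable \<nu> (h m) \<and> (\<integral>t. cmod (h m t) \<partial>\<nu>) \<le> 1) \<and>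
     (\<forall>z. (\<forall>j\<in>{i}. z \<noteq> w $ j) \<longrightarrow>
        (\<Prod>j\<in>{i}. phase (z - w $ j)) = (\<Sum>m=1..card {i}. \<integral>t. phase (z - dotw w t) ^ m * h m t \<partial>\<nu>))"
    by (intro exI[of _ \<nu>] exI[of _ "\<lambda>_ _. 1"]) simp
qed

lemma Inv_all: "(S::'n::finite set) \<noteq> {} \<Longrightarrow> Inv S"
proof -
  assume ne: "S \<noteq> {}"
  have "finite S" by simp
  from this ne show "Inv S"
  proof (induction S rule: finite_ne_induct)
    case (singleton x) then show ?case by (rule base)
  next
    case (insert x F) then show ?case using step by blast
  qed
qed

theorem theorem3p7:
  shows "\<exists>C::real. C > 0 \<and>
    (\<forall>w :: complex ^ 'n. \<exists>\<mu> :: nat \<Rightarrow> 'n cmeasure.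
       (\<forall>k\<in>{1..CARD('n)}. is_cmeasure_on std_simplex (\<mu> k) \<and> cm_total_var (\<mu> k) \<le> C) \<and>
       (\<forall>z::complex. (\<forall>j. z \<noteq> w $ j) \<longrightarrow>
          phase (\<Prod>j\<in>UNIV. z - w $ j) =
          (\<Sum>k=1..CARD('n). cm_integral (\<mu> k)
              (\<lambda>t. phase (z - (\<Sum>j\<in>UNIV. complex_of_real (t $ j) * w $ j)) ^ k))))"
proof -
  have "Inv (UNIV :: 'n set)" by (rule Inv_all) simp
  then obtain C where C: "\<forall>w::complex^'n. \<exists>(\<nu>::(real^'n) measure) (h::nat \<Rightarrow> real^'n \<Rightarrow> complex).
     finite_measure \<nu> \<and> sets \<nu> = sets borel \<and> emeasure \<nu> (UNIV - std_simplex) = 0 \<and>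
     (\<forall>m\<in>{1..CARD('n)}. h m \<in> borel_measurable borel \<and> integrable \<nu> (h m) \<and> (\<integral>t. cmod (h m t) \<partial>\<nu>) \<le> C) \<and>
     (\<forall>z. (\<forall>j\<in>UNIV. z \<noteq> w $ j) \<longrightarrow>
        (\<Prod>j\<in>UNIV. phase (z - w $ j)) = (\<Sum>m=1..CARD('n). \<integral>t. phase (z - dotw w t) ^ m * h m t \<partial>\<nu>))"
    unfolding Inv_def by (elim exE) (rule that)
  show ?thesis
  proof (intro exI[of _ "max C 1"] conjI allI)
    show "0 < max C 1" by simp
    fix w :: "complex^'n"
    obtain \<nu> :: "(real^'n) measure" and h :: "nat \<Rightarrow> real^'n \<Rightarrow> complex" where
      fn: "finite_measure \<nu>" and s\<nu>: "sets \<nu> = sets borel" and supp: "emeasure \<nu> (UNIV - std_simplex) = 0"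
      and hprop: "\<forall>m\<in>{1..CARD('n)}. h m \<in> borel_measurable borel \<and> integrable \<nu> (h m) \<and> (\<integral>t. cmod (h m t) \<partial>\<nu>) \<le> C"
      and ident: "\<forall>z. (\<forall>j\<in>UNIV. z \<noteq> w $ j) \<longrightarrow>
        (\<Prod>j\<in>UNIV. phase (z - w $ j)) = (\<Sum>m=1..CARD('n). \<integral>t. phase (z - dotw w t) ^ m * h m t \<partial>\<nu>)"
      using spec[OF C, of w] by (elim exE conjE) (rule that; assumption)
    show "\<exists>\<mu> :: nat \<Rightarrow> 'n cmeasure.
       (\<forall>k\<in>{1..CARD('n)}. is_cmeasure_on std_simplex (\<mu> k) \<and> cm_total_var (\<mu> k) \<le> max C 1) \<and>
       (\<forall>z::complex. (\<forall>j. z \<noteq> w $ j) \<longrightarrow>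
          phase (\<Prod>j\<in>UNIV. z - w $ j) =
          (\<Sum>k=1..CARD('n). cm_integral (\<mu> k)
              (\<lambda>t. phase (z - (\<Sum>j\<in>UNIV. complex_of_real (t $ j) * w $ j)) ^ k)))"
    proof (intro exI[of _ "\<lambda>k. (\<nu>, h k)"] conjI ballI allI impI)
      fix k assume k: "k \<in> {1..CARD('n)}"
      show "is_cmeasure_on std_simplex (\<nu>, h k)"
        unfolding is_cmeasure_on_def using fn s\<nu> supp hprop k by auto
      show "cm_total_var (\<nu>, h k) \<le> max C 1"
        unfolding cm_total_var_def using hprop k by force
    next
      fix z :: complex assume z: "\<forall>j. z \<noteq> w $ j"
      show "phase (\<Prod>j\<in>UNIV. z - w $ j) =
          (\<Sum>k=1..CARD('n). cm_integral (\<nu>, h k)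
              (\<lambda>t. phase (z - (\<Sum>j\<in>UNIV. complex_of_real (t $ j) * w $ j)) ^ k))"
        using ident z by (simp add: phase_prod cm_integral_def dotw_def)
    qed
  qed
qed

end
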